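(* Let $G$ be a connected graph and $\sigma$ a BFS ordering of $G$. If the $\mathcal{F}$-tree $T$ of $\sigma$ has at most $k$ leaves, then the bandwidth of $\sigma$ is at most $k$.
   Context: All graphs are finite, simple, undirected, connected and non-empty. A BFS ordering is an ordering of $V(G)$ produced by breadth-first search: pick a start vertex, mark it visited and put it in a queue; repeatedly remove the front vertex $v$ of the queue and append all not yet visited neighbors of $v$ (in some order) to the queue, marking them visited; the ordering is the order in which vertices are visited. The $\mathcal{F}$-tree of an ordering $\sigma=(v_1,\dots,v_n)$ (where each $v_i$, $i>1$, has an earlier neighbor) is the spanning tree rooted at $v_1$ in which the parent of each $v_i$, $i>1$, is its neighbor appearing leftmost in $\sigma$. A leaf is a non-root vertex of the tree without children (the root is never a leaf). The bandwidth of $\sigma=(v_1,\dots,v_n)$ is $\max_{v_iv_j\in E(G)}|i-j|$. *)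

theory Defs
  imports Main
begin

definition simple_graph :: "'a set \<Rightarrow> ('a \<Rightarrow> 'a \<Rightarrow> bool) \<Rightarrow> bool" where
  "simple_graph V E \<longleftrightarrow> finite V \<and> (\<forall>u v. E u v \<longrightarrow> u \<in> V \<and> v \<in> V)
     \<and> (\<forall>u v. E u v \<longrightarrow> E v u) \<and> (\<forall>v. \<not> E v v)"

definition connected_graph :: "'a set \<Rightarrow> ('a \<Rightarrow> 'a \<Rightarrow> bool) \<Rightarrow> bool" where
  "connected_graph V E \<longleftrightarrow> V \<noteq> {} \<and> (\<forall>u\<in>V. \<forall>v\<in>V. E\<^sup>*\<^sup>* u v)"

text \<open>BFS process: states are (queue, visited vertices in order of visiting).\<close>
inductive bfs_state :: "'a set \<Rightarrow> ('a \<Rightarrow> 'a \<Rightarrow> bool) \<Rightarrow> 'a list \<Rightarrow> 'a list \<Rightarrow> bool"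
  for V E where
  start: "v \<in> V \<Longrightarrow> bfs_state V E [v] [v]"
| step: "bfs_state V E (v # Q) vis \<Longrightarrow> distinct L \<Longrightarrow>
         set L = {u. E v u \<and> u \<notin> set vis} \<Longrightarrow>
         bfs_state V E (Q @ L) (vis @ L)"

definition bfs_ordering :: "'a set \<Rightarrow> ('a \<Rightarrow> 'a \<Rightarrow> bool) \<Rightarrow> 'a list \<Rightarrow> bool" where
  "bfs_ordering V E \<sigma> \<longleftrightarrow> bfs_state V E [] \<sigma> \<and> distinct \<sigma> \<and> set \<sigma> = V"

text \<open>F-tree parent of a non-first vertex: its leftmost neighbour in the ordering.\<close>
definition ftree_parent :: "('a \<Rightarrow> 'a \<Rightarrow> bool) \<Rightarrow> 'a list \<Rightarrow> 'a \<Rightarrow> 'a" where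
  "ftree_parent E \<sigma> v = \<sigma> ! (LEAST j. j < length \<sigma> \<and> E (\<sigma> ! j) v)"

definition ftree_leaves :: "('a \<Rightarrow> 'a \<Rightarrow> bool) \<Rightarrow> 'a list \<Rightarrow> 'a set" where
  "ftree_leaves E \<sigma> = {v \<in> set \<sigma>. v \<noteq> hd \<sigma> \<and>
      \<not> (\<exists>w \<in> set \<sigma>. w \<noteq> hd \<sigma> \<and> ftree_parent E \<sigma> w = v)}"

definition bandwidth :: "('a \<Rightarrow> 'a \<Rightarrow> bool) \<Rightarrow> 'a list \<Rightarrow> nat" where
  "bandwidth E \<sigma> = Max ({0} \<union> {if i \<le> j then j - i else i - j | i j.
      i < length \<sigma> \<and> j < length \<sigma> \<and> E (\<sigma> ! i) (\<sigma> ! j)})"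

end

theory Submission
  imports Defs
begin

definition binv :: "('a \<Rightarrow> 'a \<Rightarrow> bool) \<Rightarrow> 'a list \<Rightarrow> 'a list \<Rightarrow> bool" where
  "binv E Q vis \<longleftrightarrow> (\<exists>D. vis = D @ Q
    \<and> (\<forall>b. 1 \<le> b \<and> b < length vis \<longrightarrow> (\<exists>a<b. a < length D \<and> E (vis!a) (vis!b)))
    \<and> (\<forall>a<length D. \<forall>u. E (vis!a) u \<longrightarrow> u \<in> set vis)
    \<and> (\<forall>x a b. x < a \<and> a < b \<and> b < length vis \<and> E (vis!x) (vis!b)
          \<longrightarrow> (\<exists>y\<le>x. E (vis!y) (vis!a))))"

lemma binv_bfs: assumes "bfs_state V E Q vis" shows "binv E Q vis"
  using assms
proof (induction rule: bfs_state.induct)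
  case (start v)
  show ?case unfolding binv_def by (rule exI[of _ "[]"]) auto
next
  case (step v Q vis L)
  from step.IH obtain D where vD: "vis = D @ v # Q"
    and I2: "\<forall>b. 1 \<le> b \<and> b < length vis \<longrightarrow> (\<exists>a<b. a < length D \<and> E (vis!a) (vis!b))"
    and I3: "\<forall>a<length D. \<forall>u. E (vis!a) u \<longrightarrow> u \<in> set vis"
    and I4: "\<forall>x a b. x < a \<and> a < b \<and> b < length vis \<and> E (vis!x) (vis!b)
          \<longrightarrow> (\<exists>y\<le>x. E (vis!y) (vis!a))"
    unfolding binv_def by blast
  define m where "m = length vis"
  define d where "d = length D"
  have dm: "d < m" using vD unfolding m_def d_def by simp
  have vd: "vis ! d = v" using vD unfolding d_def by simp
  have nth': "(vis @ L) ! i = (if i < m then vis ! i else L ! (i - m))" for i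
    unfolding m_def by (simp add: nth_append)
  have newE: "E v ((vis @ L) ! i)" "(vis @ L) ! i \<notin> set vis" if "m \<le> i" "i < length (vis @ L)" for i
  proof -
    have "L ! (i - m) \<in> set L" using that unfolding m_def by simp
    then show "E v ((vis @ L) ! i)" "(vis @ L) ! i \<notin> set vis"
      using step.hyps(3) that nth'[of i] by auto
  qed
  have oldI: "(vis @ L) ! i = vis ! i" if "i < m" for i using nth' that by simp
  have Lm: "length (vis @ L) = m + length L" unfolding m_def by simp
  have A2: "\<forall>b. 1 \<le> b \<and> b < length (vis @ L) \<longrightarrow> (\<exists>a<b. a < length (D @ [v]) \<and> E ((vis @ L)!a) ((vis @ L)!b))"
  proof (intro allI impI)
    fix b assume b: "1 \<le> b \<and> b < length (vis @ L)"
    show "\<exists>a<b. a < length (D @ [v]) \<and> E ((vis @ L)!a) ((vis @ L)!b)"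
    proof (cases "b < m")
      case True
      then obtain a where "a<b" "a < d" "E (vis!a) (vis!b)" using I2 b unfolding m_def d_def by blast
      moreover have "a < m" using \<open>a < b\<close> True by simp
      ultimately show ?thesis using True oldI[of a] oldI[of b] unfolding d_def
        by (intro exI[of _ a]) simp
    next
      case False
      then show ?thesis using newE[of b] b dm vd oldI[of d]
        by (intro exI[of _ d]) (auto simp: d_def)
    qed
  qed
  have A3: "\<forall>a<length (D @ [v]). \<forall>u. E ((vis @ L)!a) u \<longrightarrow> u \<in> set (vis @ L)"
  proof (intro allI impI)
    fix a u assume a: "a < length (D @ [v])" and e: "E ((vis @ L)!a) u"
    show "u \<in> set (vis @ L)"
    proof (cases "a < d")
      case True
      then show ?thesis using I3 e oldI[of a] dm unfolding d_def by auto
    next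
      case False
      then have "a = d" using a unfolding d_def by simp
      then have "E v u" using e oldI[of d] dm vd by simp
      then show ?thesis using step.hyps(3) by auto
    qed
  qed
  have A4: "\<forall>x a b. x < a \<and> a < b \<and> b < length (vis @ L) \<and> E ((vis @ L)!x) ((vis @ L)!b)
          \<longrightarrow> (\<exists>y\<le>x. E ((vis @ L)!y) ((vis @ L)!a))"
  proof (intro allI impI)
    fix x a b assume h: "x < a \<and> a < b \<and> b < length (vis @ L) \<and> E ((vis @ L)!x) ((vis @ L)!b)"
    show "\<exists>y\<le>x. E ((vis @ L)!y) ((vis @ L)!a)"
    proof (cases "b < m")
      case True
      have "E (vis!x) (vis!b)" using h True oldI[of x] oldI[of b] by simp
      then obtain y where "y \<le> x" "E (vis!y) (vis!a)"
        using I4[rule_format, of x a b] h True unfolding m_def by blast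
      then show ?thesis using True h oldI[of y] oldI[of a] by (intro exI[of _ y]) auto
    next
      case bnew: False
      have bn: "(vis @ L) ! b \<notin> set vis" using newE[of b] bnew h by simp
      have xd: "d \<le> x"
      proof (rule ccontr)
        assume "\<not> d \<le> x"
        then have "x < d" by simp
        then have "E (vis ! x) ((vis @ L) ! b)" using h oldI[of x] dm by simp
        then have "(vis @ L) ! b \<in> set vis" using I3 \<open>x < d\<close> unfolding d_def by blast
        then show False using bn by simp
      qed
      show ?thesis
      proof (cases "a < m")
        case True
        have "1 \<le> a" using h by simp
        then obtain y where "y < a" "y < d" "E (vis!y) (vis!a)" using I2 True unfolding m_def d_def by blast
        then show ?thesis using True xd oldI[of y] oldI[of a] by (intro exI[of _ y]) auto
      next
        case False
        then show ?thesis using newE[of a] h xd oldI[of d] dm vd by (intro exI[of _ d]) auto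
      qed
    qed
  qed
  have "vis @ L = (D @ [v]) @ (Q @ L)" using vD by simp
  then show ?case unfolding binv_def using A2 A3 A4 by blast
qed


locale bfsl =
  fixes E :: "'a \<Rightarrow> 'a \<Rightarrow> bool" and \<sigma> :: "'a list"
  assumes FA: "\<And>b. 1 \<le> b \<Longrightarrow> b < length \<sigma> \<Longrightarrow> \<exists>a<b. E (\<sigma>!a) (\<sigma>!b)"
    and FB: "\<And>x a b. x < a \<Longrightarrow> a < b \<Longrightarrow> b < length \<sigma> \<Longrightarrow> E (\<sigma>!x) (\<sigma>!b)
          \<Longrightarrow> \<exists>y\<le>x. E (\<sigma>!y) (\<sigma>!a)"
    and dist: "distinct \<sigma>"
begin

definition par :: "nat \<Rightarrow> nat" where
  "par b = (LEAST j. j < length \<sigma> \<and> E (\<sigma>!j) (\<sigma>!b))"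

definition R :: "nat \<Rightarrow> nat \<Rightarrow> bool" where
  "R c b \<longleftrightarrow> 1 \<le> b \<and> b < length \<sigma> \<and> par b = c"

definition LI :: "nat set" where
  "LI = {l. 1 \<le> l \<and> l < length \<sigma> \<and> \<not> (\<exists>c. R l c)}"

lemma par_le: "x < length \<sigma> \<Longrightarrow> E (\<sigma>!x) (\<sigma>!b) \<Longrightarrow> par b \<le> x"
  unfolding par_def by (rule Least_le) simp

lemma par_lt: assumes "1 \<le> b" "b < length \<sigma>"
  shows "par b < b" "E (\<sigma>!par b) (\<sigma>!b)"
proof -
  obtain a where a: "a < b" "E (\<sigma>!a) (\<sigma>!b)" using FA assms by blast
  then have "par b \<le> a" using par_le assms by simp
  then show "par b < b" using a by simp
  have "par b < length \<sigma> \<and> E (\<sigma>!par b) (\<sigma>!b)"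
    unfolding par_def by (rule LeastI[of _ a]) (use a assms in simp)
  then show "E (\<sigma>!par b) (\<sigma>!b)" by simp
qed

lemma par_mono: assumes "1 \<le> a" "a \<le> b" "b < length \<sigma>" shows "par a \<le> par b"
proof (cases "a = b")
  case False
  then have ab: "a < b" using assms by simp
  have pb: "par b < b" "E (\<sigma>!par b) (\<sigma>!b)" using par_lt[of b] assms by auto
  show ?thesis
  proof (cases "par b < a")
    case True
    then obtain y where "y \<le> par b" "E (\<sigma>!y) (\<sigma>!a)" using FB[OF True ab assms(3) pb(2)] by blast
    then show ?thesis using par_le[of y a] assms pb(1) by simp
  next
    case False
    then show ?thesis using par_lt[of a] assms ab by simp
  qed
qed simp

lemma R_lt: "R\<^sup>+\<^sup>+ a b \<Longrightarrow> a < b"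
proof (induction rule: tranclp_induct)
  case (base y) then show ?case using par_lt unfolding R_def by auto
next
  case (step y z) then show ?case using par_lt unfolding R_def by fastforce
qed

lemma R_le: "R\<^sup>*\<^sup>* a b \<Longrightarrow> a \<le> b"
  using R_lt by (metis order.order_iff_strict rtranclpD)

lemma R_bound: "R\<^sup>*\<^sup>* a b \<Longrightarrow> a < length \<sigma> \<Longrightarrow> b < length \<sigma>"
  by (induction rule: rtranclp_induct) (auto simp: R_def)

lemma uniq: "R\<^sup>*\<^sup>* a l \<Longrightarrow> R\<^sup>*\<^sup>* b l \<Longrightarrow> R\<^sup>*\<^sup>* a b \<or> R\<^sup>*\<^sup>* b a"
proof (induction arbitrary: rule: rtranclp_induct)
  case base then show ?case by simp
next
  case (step y z)
  show ?case
  proof (cases "b = z")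
    case True then show ?thesis using step by (meson rtranclp.rtrancl_into_rtrancl)
  next
    case False
    then obtain y' where "R\<^sup>*\<^sup>* b y'" "R y' z" using step.prems
      by (metis rtranclp.cases)
    moreover have "y' = y" using \<open>R y' z\<close> \<open>R y z\<close> unfolding R_def by simp
    ultimately show ?thesis using step.IH by simp
  qed
qed

lemma leafex: "1 \<le> b \<Longrightarrow> b < length \<sigma> \<Longrightarrow> \<exists>l. R\<^sup>*\<^sup>* b l \<and> l \<in> LI"
proof (induction "length \<sigma> - b" arbitrary: b rule: less_induct)
  case less
  show ?case
  proof (cases "\<exists>c. R b c")
    case False
    then show ?thesis using less.prems unfolding LI_def by auto
  next
    case True
    then obtain c where c: "R b c" by blast
    then have "b < c" "1 \<le> c" "c < length \<sigma>" using R_lt[of b c] unfolding R_def by auto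
    moreover have "length \<sigma> - c < length \<sigma> - b" using \<open>b < c\<close> \<open>c < length \<sigma>\<close> by simp
    ultimately obtain l where "R\<^sup>*\<^sup>* c l" "l \<in> LI" using less.hyps[of c] by blast
    then show ?thesis using c by (meson converse_rtranclp_into_rtranclp)
  qed
qed

lemma antichain:
  assumes ij: "i < j" "j < length \<sigma>" "E (\<sigma>!i) (\<sigma>!j)"
    and a: "i < a" "a \<le> j" and b: "i < b" "b \<le> j"
    and "R\<^sup>*\<^sup>* a l" "R\<^sup>*\<^sup>* b l"
  shows "a = b"
proof -
  have pj: "par j \<le> i" using par_le ij by simp
  have no: False if h: "i < a'" "a' \<le> j" "i < b'" "R\<^sup>+\<^sup>+ b' a'" for a' b'
  proof -
    obtain y where y: "R b' y" "R\<^sup>*\<^sup>* y a'" using h(4) by (meson tranclpD)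
    then have "y \<le> a'" using R_le by simp
    have "1 \<le> y" "y < length \<sigma>" "par y = b'" using y(1) unfolding R_def by auto
    then have "par y \<le> par j" using par_mono[of y j] \<open>y \<le> a'\<close> h ij by simp
    then show False using pj \<open>par y = b'\<close> h by simp
  qed
  from uniq[OF assms(8,9)] show ?thesis
  proof
    assume "R\<^sup>*\<^sup>* a b"
    then show ?thesis using no[of b a] a b by (metis rtranclpD)
  next
    assume "R\<^sup>*\<^sup>* b a"
    then show ?thesis using no[of a b] a b by (metis rtranclpD)
  qed
qed

lemma fparent: "ftree_parent E \<sigma> (\<sigma>!c) = \<sigma>!(par c)"
  unfolding ftree_parent_def par_def by simp

lemma leaves_eq: assumes "\<sigma> \<noteq> []" shows "ftree_leaves E \<sigma> = (\<lambda>l. \<sigma>!l) ` LI"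
proof -
  have hd: "hd \<sigma> = \<sigma>!0" using assms by (simp add: hd_conv_nth)
  have eqi: "\<sigma>!p = \<sigma>!q \<longleftrightarrow> p = q" if "p < length \<sigma>" "q < length \<sigma>" for p q
    using dist that by (simp add: nth_eq_iff_index_eq)
  show ?thesis
  proof (rule set_eqI, rule iffI)
    fix v assume v: "v \<in> ftree_leaves E \<sigma>"
    then obtain l where l: "l < length \<sigma>" "v = \<sigma>!l" unfolding ftree_leaves_def
      by (auto simp: in_set_conv_nth)
    have "\<sigma>!l \<noteq> hd \<sigma>" using v l unfolding ftree_leaves_def by auto
    then have "l \<noteq> 0" using hd by metis
    moreover have "\<not> R l c" for c
    proof
      assume "R l c"
      then have c: "1 \<le> c" "c < length \<sigma>" "par c = l" unfolding R_def by auto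
      have "0 < length \<sigma>" using c(2) by linarith
      then have "\<sigma>!c \<noteq> hd \<sigma>" using c hd eqi[of c 0] by auto
      then show False using v c l fparent[of c] unfolding ftree_leaves_def by auto
    qed
    ultimately show "v \<in> (\<lambda>l. \<sigma>!l) ` LI" using l unfolding LI_def by auto
  next
    fix v assume "v \<in> (\<lambda>l. \<sigma>!l) ` LI"
    then obtain l where l: "l \<in> LI" "v = \<sigma>!l" by auto
    then have l': "1 \<le> l" "l < length \<sigma>" "\<And>c. \<not> R l c" unfolding LI_def by auto
    have "0 < length \<sigma>" using l'(2) by linarith
    then have "v \<noteq> hd \<sigma>" using l l' hd eqi[of l 0] by auto
    moreover have "\<not> (ftree_parent E \<sigma> w = v)" if w: "w \<in> set \<sigma>" "w \<noteq> hd \<sigma>" for w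
    proof
      assume fw: "ftree_parent E \<sigma> w = v"
      obtain c where c: "c < length \<sigma>" "w = \<sigma>!c" using w by (auto simp: in_set_conv_nth)
      have "c \<noteq> 0" using c w hd by (metis)
      then have "par c < c" using par_lt[of c] c by simp
      then have "par c = l" using fw c fparent[of c] l l' eqi[of "par c" l] by simp
      then show False using l'(3)[of c] \<open>c \<noteq> 0\<close> c unfolding R_def by simp
    qed
    ultimately show "v \<in> ftree_leaves E \<sigma>" using l l' unfolding ftree_leaves_def by auto
  qed
qed

lemma main:
  assumes ij: "i < j" "j < length \<sigma>" "E (\<sigma>!i) (\<sigma>!j)"
  shows "j - i \<le> card (ftree_leaves E \<sigma>)"
proof -
  define f where "f a = (SOME l. R\<^sup>*\<^sup>* a l \<and> l \<in> LI)" for a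
  have f: "R\<^sup>*\<^sup>* a (f a) \<and> f a \<in> LI" if "a \<in> {i<..j}" for a
    unfolding f_def by (rule someI_ex, rule leafex) (use that ij in auto)
  have inj: "inj_on f {i<..j}"
  proof (rule inj_onI)
    fix a b assume "a \<in> {i<..j}" "b \<in> {i<..j}" "f a = f b"
    then show "a = b" using antichain[OF ij, of a b "f a"] f[of a] f[of b] by auto
  qed
  have fin: "finite LI" unfolding LI_def by auto
  have "card {i<..j} \<le> card LI"
    by (rule card_inj_on_le[OF inj _ fin]) (use f in auto)
  moreover have "card LI = card (ftree_leaves E \<sigma>)"
  proof -
    have "inj_on (\<lambda>l. \<sigma>!l) LI" using dist unfolding LI_def
      by (intro inj_onI) (auto simp: nth_eq_iff_index_eq)
    moreover have "\<sigma> \<noteq> []" using ij by auto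
    ultimately show ?thesis using leaves_eq by (simp add: card_image)
  qed
  ultimately show ?thesis by simp
qed

end

theorem theorem3p3:
  fixes V :: "'a set" and E :: "'a \<Rightarrow> 'a \<Rightarrow> bool" and \<sigma> :: "'a list" and k :: nat
  assumes "simple_graph V E" and "connected_graph V E"
    and "bfs_ordering V E \<sigma>"
    and "card (ftree_leaves E \<sigma>) \<le> k"
  shows "bandwidth E \<sigma> \<le> k"
proof -
  have bs: "bfs_state V E [] \<sigma>" and dist: "distinct \<sigma>"
    using assms(3) unfolding bfs_ordering_def by auto
  from binv_bfs[OF bs] obtain D where D: "\<sigma> = D @ []"
    and I2: "\<forall>b. 1 \<le> b \<and> b < length \<sigma> \<longrightarrow> (\<exists>a<b. a < length D \<and> E (\<sigma>!a) (\<sigma>!b))"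
    and I4: "\<forall>x a b. x < a \<and> a < b \<and> b < length \<sigma> \<and> E (\<sigma>!x) (\<sigma>!b)
          \<longrightarrow> (\<exists>y\<le>x. E (\<sigma>!y) (\<sigma>!a))"
    unfolding binv_def by blast
  interpret bfsl E \<sigma>
    by unfold_locales (use I2 I4 dist in blast)+
  have sym: "\<And>u v. E u v \<Longrightarrow> E v u" and irr: "\<And>v. \<not> E v v"
    using assms(1) unfolding simple_graph_def by auto
  define S where "S = {if i \<le> j then j - i else i - j | i j.
      i < length \<sigma> \<and> j < length \<sigma> \<and> E (\<sigma> ! i) (\<sigma> ! j)}"
  have Sk: "s \<le> k" if sS: "s \<in> S" for s
  proof -
    obtain i j where s: "s = (if i \<le> j then j - i else i - j)" "i < length \<sigma>" "j < length \<sigma>"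
      "E (\<sigma> ! i) (\<sigma> ! j)" using sS unfolding S_def by fastforce
    have "i \<noteq> j" using s irr by auto
    then consider "i < j" | "j < i" by linarith
    then show ?thesis
    proof cases
      case 1 then show ?thesis using main[of i j] s assms(4) by simp
    next
      case 2 then show ?thesis using main[of j i] s sym assms(4) by simp
    qed
  qed
  have "S \<subseteq> {..length \<sigma>}" unfolding S_def by auto
  then have "finite S" by (rule finite_subset) simp
  then show ?thesis unfolding bandwidth_def S_def[symmetric] using Sk
    by (subst Max_le_iff) auto
qed

end
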